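(* Let $l\ge0$ and suppose $\tau\in S_n$ has at least $l+1$ runs. Then $$\sum_{\substack{Pr\in\mathcal{P}ref_n\\ \operatorname{diagword}(Pr)=\tau\\ l(Pr)=l}} t^{\operatorname{area}(Pr)}q^{\operatorname{dinv}(Pr)}Q_{\operatorname{ides}(Pr)} = \Bigg(\sum_{\substack{Pr\in\mathcal{P}ref_n\\ \operatorname{diagword}(Pr)=\tau\\ l(Pr)=l}} t^{\operatorname{area}(Pr)}q^{\operatorname{dinv}(Pr)}\Bigg)\cdot\frac{\sum_{\pi\in\operatorname{Yconsec}(\tau)}q^{\operatorname{inv}(\pi)}Q_{\operatorname{ides}(\tau)\cup\operatorname{ides}(\pi)}}{\sum_{\pi\in\operatorname{Yconsec}(\tau)}q^{\operatorname{inv}(\pi)}}.$$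
   Context: Runs of a permutation are its maximal increasing contiguous segments. A preference function on $n$ cars is a map $f:[n]\to[n]$; $\mathcal{P}ref_n$ is the set of them. It is drawn as a labeled lattice path in the $n\times n$ grid: for $j=1,\dots,n$ in turn, the cars in $f^{-1}(j)$ are written in column $j$ in increasing order bottom to top in the lowest unused rows. A car in the cell with lower-left corner $(x,y)$ lies in diagonal $y-x$. The deviation $l(Pr)$ is the maximum over cars of minus their diagonal (always $\ge0$). $\operatorname{area}(Pr)=\sum_c(d(c)+l(Pr))$, $d(c)$ the diagonal of car $c$. $\operatorname{dinv}(Pr)$ = (number of pairs of cars in the same diagonal with the left one smaller) + (number of pairs $b<a$ with $a$ in diagonal $m+1$, $b$ in diagonal $m$, and $b$ in a column strictly right of $a$) + (number of cars in negative diagonals). $\operatorname{diagword}(Pr)$ lists the cars of each nonempty diagonal in increasing order, diagonals from highest to lowest. The word $\sigma(Pr)$ reads the cars from highest to lowest diagonal and, within a diagonal, from right to left. For a permutation $\sigma\in S_n$ in one-line notation, $\operatorname{ides}(\sigma)=\{i\in[n-1]: i+1 \text{ appears to the left of } i \text{ in } \sigma\}$, and $\operatorname{ides}(Pr)=\operatorname{ides}(\sigma(Pr))$; $\operatorname{inv}(\pi)=\#\{i<j:\pi_i>\pi_j\}$. The consecutive blocks of $\tau$ are the parts of the set partition of $[n]$ in which $i$ and $i+1$ are in the same part iff $i$ appears immediately to the left of $i+1$ in $\tau$; $\operatorname{Yconsec}(\tau)\subseteq S_n$ is the Young subgroup of permutations of $[n]$ mapping each consecutive block of $\tau$ to itself.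 For $S\subseteq[n-1]$, $Q_S=\sum x_{a_1}\cdots x_{a_n}$, summed over $a_1\le\dots\le a_n$ (positive integers) with $a_i<a_{i+1}$ whenever $i\in S$ (Gessel's fundamental quasisymmetric function). *)

theory Defs
  imports "HOL-Library.FuncSet" "HOL-Combinatorics.Multiset_Permutations"
begin

(* Permutations of [n] are lists in one-line notation (permutations_of_set {1..n}).
   Preference functions are f : {1..n} \<rightarrow> {1..n}, extensional (f c = undefined outside). *)

definition Pref :: "nat \<Rightarrow> (nat \<Rightarrow> nat) set" where
  "Pref n = {1..n} \<rightarrow>\<^sub>E {1..n}"

(* lattice path picture: car c sits in column f c, i.e. its cell has lower-left x-coordinate f c - 1;
   its row (lower-left y-coordinate) is the number of cars placed before it *)
definition pcol :: "(nat \<Rightarrow> nat) \<Rightarrow> nat \<Rightarrow> nat" where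
  "pcol f c = f c - 1"

definition prow :: "nat \<Rightarrow> (nat \<Rightarrow> nat) \<Rightarrow> nat \<Rightarrow> nat" where
  "prow n f c = card {c' \<in> {1..n}. f c' < f c} + card {c' \<in> {1..n}. f c' = f c \<and> c' < c}"

definition pdiag :: "nat \<Rightarrow> (nat \<Rightarrow> nat) \<Rightarrow> nat \<Rightarrow> int" where
  "pdiag n f c = int (prow n f c) - int (pcol f c)"

definition pdev :: "nat \<Rightarrow> (nat \<Rightarrow> nat) \<Rightarrow> int" where
  "pdev n f = Max ((\<lambda>c. - pdiag n f c) ` {1..n})"

definition parea :: "nat \<Rightarrow> (nat \<Rightarrow> nat) \<Rightarrow> nat" where
  "parea n f = nat (\<Sum>c\<in>{1..n}. pdiag n f c + pdev n f)"

definition pdinv :: "nat \<Rightarrow> (nat \<Rightarrow> nat) \<Rightarrow> nat" where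
  "pdinv n f =
     card {(a, b). a \<in> {1..n} \<and> b \<in> {1..n} \<and> pdiag n f a = pdiag n f b
                   \<and> pcol f a < pcol f b \<and> a < b}
   + card {(a, b). a \<in> {1..n} \<and> b \<in> {1..n} \<and> b < a
                   \<and> pdiag n f a = pdiag n f b + 1 \<and> pcol f b > pcol f a}
   + card {c \<in> {1..n}. pdiag n f c < 0}"

definition diagcars :: "nat \<Rightarrow> (nat \<Rightarrow> nat) \<Rightarrow> int \<Rightarrow> nat set" where
  "diagcars n f k = {c \<in> {1..n}. pdiag n f c = k}"

(* all diagonals lie in [-n, n]; listed from highest to lowest *)
definition diagword :: "nat \<Rightarrow> (nat \<Rightarrow> nat) \<Rightarrow> nat list" where
  "diagword n f = concat (map (\<lambda>k. sorted_list_of_set (diagcars n f k)) (rev [- int n .. int n]))"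

definition sigmaword :: "nat \<Rightarrow> (nat \<Rightarrow> nat) \<Rightarrow> nat list" where
  "sigmaword n f = concat (map (\<lambda>k. rev (sort_key (pcol f) (sorted_list_of_set (diagcars n f k))))
                              (rev [- int n .. int n]))"

definition ides :: "nat list \<Rightarrow> nat set" where
  "ides \<sigma> = {i \<in> {1..<length \<sigma>}. \<exists>a b. a < b \<and> b < length \<sigma> \<and> \<sigma> ! a = i + 1 \<and> \<sigma> ! b = i}"

definition inv_count :: "nat list \<Rightarrow> nat" where
  "inv_count \<pi> = card {(i, j). i < j \<and> j < length \<pi> \<and> \<pi> ! i > \<pi> ! j}"

definition nruns :: "nat list \<Rightarrow> nat" where
  "nruns \<tau> = card {i. i < length \<tau> \<and> (i = 0 \<or> \<tau> ! (i - 1) > \<tau> ! i)}"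

definition consec_adj :: "nat list \<Rightarrow> nat \<Rightarrow> bool" where
  "consec_adj \<tau> i = (\<exists>j. j + 1 < length \<tau> \<and> \<tau> ! j = i \<and> \<tau> ! (j + 1) = i + 1)"

definition same_block :: "nat list \<Rightarrow> nat \<Rightarrow> nat \<Rightarrow> bool" where
  "same_block \<tau> i k = (\<forall>m. min i k \<le> m \<and> m < max i k \<longrightarrow> consec_adj \<tau> m)"

definition Yconsec :: "nat list \<Rightarrow> nat list set" where
  "Yconsec \<tau> = {\<pi> \<in> permutations_of_set {1..length \<tau>}.
                   \<forall>i \<in> {1..length \<tau>}. same_block \<tau> i (\<pi> ! (i - 1))}"

(* coefficient of the monomial \<Prod>_k x_k^(\<alpha> k) in Gessel's Q_S of degree n *)
definition Qcoeff :: "nat \<Rightarrow> nat set \<Rightarrow> (nat \<Rightarrow> nat) \<Rightarrow> nat" where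
  "Qcoeff n S \<alpha> = card {a :: nat list. length a = n \<and> (\<forall>i < n. 1 \<le> a ! i)
       \<and> (\<forall>i. i + 1 < n \<longrightarrow> a ! i \<le> a ! (i + 1))
       \<and> (\<forall>i \<in> S. 1 \<le> i \<and> i < n \<longrightarrow> a ! (i - 1) < a ! i)
       \<and> (\<forall>k. count (mset a) k = \<alpha> k)}"

end

theory Submission imports Defs begin

locale PF =
  fixes n :: nat and f :: "nat \<Rightarrow> nat"
  assumes fP: "f \<in> Pref n"
begin

lemma fval: "c \<in> {1..n} \<Longrightarrow> f c \<in> {1..n}"
  using fP unfolding Pref_def by auto

lemma prow_lt:
  assumes c: "c \<in> {1..n}" and c': "c' \<in> {1..n}"
    and lt: "f c < f c' \<or> (f c = f c' \<and> c < c')"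
  shows "prow n f c < prow n f c'"
proof -
  define A where "A x = {d \<in> {1..n}. f d < f x}" for x
  define E where "E x = {d \<in> {1..n}. f d = f x \<and> d < x}" for x
  define F where "F = {d \<in> {1..n}. f d = f c}"
  have pr: "prow n f x = card (A x) + card (E x)" for x
    unfolding prow_def A_def E_def by simp
  show ?thesis
  proof (cases "f c < f c'")
    case True
    have "E c \<subset> F" using c unfolding E_def F_def by auto
    then have "card (E c) < card F" by (intro psubset_card_mono) (auto simp: F_def)
    moreover have "card (A c) + card F = card (A c \<union> F)"
      by (subst card_Un_disjoint) (auto simp: A_def F_def)
    moreover have "card (A c \<union> F) \<le> card (A c')"
      using True by (intro card_mono) (auto simp: A_def F_def)
    ultimately show ?thesis unfolding pr by linarith
  next
    case False
    then have eq: "f c = f c'" "c < c'" using lt by auto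
    have "A c = A c'" unfolding A_def using eq by auto
    moreover have "E c \<subset> E c'" using eq c unfolding E_def by auto
    then have "card (E c) < card (E c')" by (intro psubset_card_mono) (auto simp: E_def)
    ultimately show ?thesis unfolding pr by simp
  qed
qed

lemma prow_less: assumes c: "c \<in> {1..n}" shows "prow n f c < n"
proof -
  have "{d \<in> {1..n}. f d < f c} \<union> {d \<in> {1..n}. f d = f c \<and> d < c} \<subseteq> {1..n} - {c}" by auto
  then have "card ({d \<in> {1..n}. f d < f c} \<union> {d \<in> {1..n}. f d = f c \<and> d < c}) \<le> card ({1..n} - {c})"
    by (intro card_mono) auto
  moreover have "card ({d \<in> {1..n}. f d < f c} \<union> {d \<in> {1..n}. f d = f c \<and> d < c})
     = card {d \<in> {1..n}. f d < f c} + card {d \<in> {1..n}. f d = f c \<and> d < c}"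
    by (subst card_Un_disjoint) auto
  moreover have "card ({1..n} - {c}) = n - 1" using c by simp
  ultimately show ?thesis using c unfolding prow_def by auto
qed

lemma prow_lt_iff:
  assumes c: "c \<in> {1..n}" and c': "c' \<in> {1..n}"
  shows "prow n f c < prow n f c' \<longleftrightarrow> (f c < f c' \<or> (f c = f c' \<and> c < c'))"
proof
  assume h: "prow n f c < prow n f c'"
  show "f c < f c' \<or> (f c = f c' \<and> c < c')"
  proof (rule ccontr)
    assume "\<not> ?thesis"
    then have "c = c' \<or> f c' < f c \<or> (f c' = f c \<and> c' < c)" by auto
    then show False using prow_lt[OF c' c] h by auto
  qed
qed (rule prow_lt[OF c c'])

lemma prow_inj: "inj_on (prow n f) {1..n}"
proof (rule inj_onI)
  fix c c' assume c: "c \<in> {1..n}" and c': "c' \<in> {1..n}" and e: "prow n f c = prow n f c'"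
  show "c = c'"
  proof (rule ccontr)
    assume "c \<noteq> c'"
    then have "(f c < f c' \<or> (f c = f c' \<and> c < c')) \<or> (f c' < f c \<or> (f c' = f c \<and> c' < c))" by auto
    then show False using prow_lt[OF c c'] prow_lt[OF c' c] e by auto
  qed
qed

lemma prow_bij: "bij_betw (prow n f) {1..n} {..<n}"
proof -
  have "prow n f ` {1..n} \<subseteq> {..<n}" using prow_less by auto
  moreover have "card (prow n f ` {1..n}) = n" using card_image[OF prow_inj] by simp
  ultimately have "prow n f ` {1..n} = {..<n}" by (intro card_subset_eq) auto
  then show ?thesis using prow_inj unfolding bij_betw_def by simp
qed

definition car :: "nat \<Rightarrow> nat" where "car s = inv_into {1..n} (prow n f) s"

lemma car_in: "s < n \<Longrightarrow> car s \<in> {1..n}"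
  unfolding car_def using prow_bij by (metis bij_betw_def inv_into_into lessThan_iff)

lemma prow_car: "s < n \<Longrightarrow> prow n f (car s) = s"
  unfolding car_def using prow_bij by (metis bij_betw_def f_inv_into_f lessThan_iff)

lemma pdiag_eq: "c \<in> {1..n} \<Longrightarrow> pdiag n f c = int (prow n f c) - int (f c) + 1"
  using fval[of c] unfolding pdiag_def pcol_def by auto

lemma car_step:
  assumes s: "Suc s < n"
  shows "(f (car s) = f (car (Suc s)) \<and> car s < car (Suc s) \<and> pdiag n f (car (Suc s)) = pdiag n f (car s) + 1)
       \<or> (f (car s) < f (car (Suc s)) \<and> pdiag n f (car (Suc s)) \<le> pdiag n f (car s))"
proof -
  have i1: "car s \<in> {1..n}" and i2: "car (Suc s) \<in> {1..n}" using car_in s by auto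
  have "prow n f (car s) < prow n f (car (Suc s))" using prow_car s by auto
  then have "f (car s) < f (car (Suc s)) \<or> (f (car s) = f (car (Suc s)) \<and> car s < car (Suc s))"
    using prow_lt_iff[OF i1 i2] by simp
  then show ?thesis using pdiag_eq[OF i1] pdiag_eq[OF i2] prow_car[of s] prow_car[OF s] s by auto
qed

lemma climb:
  assumes "s1 \<le> s2" "s2 < n" "pdiag n f (car s1) \<le> k" "pdiag n f (car s2) > k"
  shows "\<exists>s. s1 \<le> s \<and> s < s2 \<and> pdiag n f (car s) = k \<and> pdiag n f (car (Suc s)) = k + 1
            \<and> f (car s) = f (car (Suc s)) \<and> car s < car (Suc s)"
  using assms
proof (induction s2)
  case 0 then show ?case by auto
next
  case (Suc s2)
  show ?case
  proof (cases "pdiag n f (car s2) > k")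
    case True
    then have "s1 \<noteq> Suc s2" using Suc by auto
    then have "s1 \<le> s2" using Suc by auto
    from Suc.IH[OF this _ Suc.prems(3) True] Suc.prems(2) show ?thesis by force
  next
    case False
    have "s1 \<noteq> Suc s2" using Suc.prems by auto
    then have "s1 \<le> s2" using Suc.prems by auto
    then show ?thesis using car_step[of s2] Suc.prems False
      by (intro exI[of _ s2]) auto
  qed
qed

lemma diag_first: "0 < n \<Longrightarrow> pdiag n f (car 0) \<le> 0"
  using car_in[of 0] prow_car[of 0] unfolding pdiag_def by auto

lemma diag_last: "0 < n \<Longrightarrow> pdiag n f (car (n - 1)) \<ge> 0"
  using car_in[of "n-1"] prow_car[of "n-1"] fval[of "car (n-1)"] unfolding pdiag_def pcol_def by auto

lemma car_prow: "c \<in> {1..n} \<Longrightarrow> car (prow n f c) = c"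
  unfolding car_def using prow_inj by (simp add: inv_into_f_f)

lemma pdiag_bound: "c \<in> {1..n} \<Longrightarrow> - int n \<le> pdiag n f c \<and> pdiag n f c \<le> int n"
  using prow_less[of c] fval[of c] unfolding pdiag_def pcol_def by auto

lemma col_inj_diag:
  assumes "c \<in> {1..n}" "c' \<in> {1..n}" "pdiag n f c = pdiag n f c'" "pcol f c = pcol f c'"
  shows "c = c'"
proof -
  have "prow n f c = prow n f c'" using assms unfolding pdiag_def by auto
  then show ?thesis using prow_inj assms by (auto dest: inj_onD)
qed

definition Rd :: "nat \<Rightarrow> nat \<Rightarrow> bool" where
  "Rd x y = (pdiag n f y < pdiag n f x \<or> (pdiag n f x = pdiag n f y \<and> x < y))"

definition Rs :: "nat \<Rightarrow> nat \<Rightarrow> bool" where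
  "Rs x y = (pdiag n f y < pdiag n f x \<or> (pdiag n f x = pdiag n f y \<and> pcol f y < pcol f x))"

lemma diagcars_fin: "finite (diagcars n f k)" unfolding diagcars_def by auto

lemma sorted_chunks_d:
  "sorted_wrt (>) ks \<Longrightarrow> sorted_wrt Rd (concat (map (\<lambda>k. sorted_list_of_set (diagcars n f k)) ks))"
proof (induction ks)
  case Nil then show ?case by simp
next
  case (Cons k ks)
  have a: "sorted_wrt Rd (sorted_list_of_set (diagcars n f k))"
    by (rule sorted_wrt_mono_rel[OF _ strict_sorted_list_of_set])
       (auto simp: Rd_def diagcars_fin diagcars_def)
  have b: "\<forall>x\<in>set (sorted_list_of_set (diagcars n f k)).
      \<forall>y\<in>set (concat (map (\<lambda>k. sorted_list_of_set (diagcars n f k)) ks)). Rd x y"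
    using Cons.prems by (auto simp: Rd_def diagcars_fin diagcars_def)
  show ?case using Cons a b by (simp add: sorted_wrt_append)
qed

lemma sorted_wrt_distinct_neq:
  "distinct xs \<Longrightarrow> sorted_wrt P xs \<Longrightarrow> sorted_wrt (\<lambda>x y. P x y \<and> x \<noteq> y) xs"
  by (induction xs) auto

lemma sorted_chunks_s:
  "sorted_wrt (>) ks \<Longrightarrow> sorted_wrt Rs (concat (map (\<lambda>k. rev (sort_key (pcol f) (sorted_list_of_set (diagcars n f k)))) ks))"
proof (induction ks)
  case Nil then show ?case by simp
next
  case (Cons k ks)
  let ?L = "sort_key (pcol f) (sorted_list_of_set (diagcars n f k))"
  have d: "distinct ?L" by (simp add: distinct_sort)
  have "sorted_wrt (\<lambda>x y. pcol f x \<le> pcol f y) ?L"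
    using sorted_sort_key[of "pcol f"] by (simp add: sorted_map)
  then have s1: "sorted_wrt (\<lambda>x y. pcol f x \<le> pcol f y \<and> x \<noteq> y) ?L"
    using sorted_wrt_distinct_neq d by blast
  have st: "set ?L = diagcars n f k" by (simp add: diagcars_fin set_sort)
  have "sorted_wrt (\<lambda>x y. Rs y x) ?L"
  proof (rule sorted_wrt_mono_rel[OF _ s1])
    fix x y assume xy: "x \<in> set ?L" "y \<in> set ?L" "pcol f x \<le> pcol f y \<and> x \<noteq> y"
    then have "pdiag n f x = k" "pdiag n f y = k" "x \<in> {1..n}" "y \<in> {1..n}"
      using st unfolding diagcars_def by auto
    then have "pcol f x \<noteq> pcol f y" using col_inj_diag xy by metis
    then show "Rs y x" using xy \<open>pdiag n f x = k\<close> \<open>pdiag n f y = k\<close> unfolding Rs_def by auto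
  qed
  then have a: "sorted_wrt Rs (rev ?L)" by (simp add: sorted_wrt_rev)
  have b: "\<forall>x\<in>set (rev ?L).
      \<forall>y\<in>set (concat (map (\<lambda>k. rev (sort_key (pcol f) (sorted_list_of_set (diagcars n f k)))) ks)). Rs x y"
    using Cons.prems by (auto simp: Rs_def diagcars_fin diagcars_def set_sort)
  show ?case using Cons a b by (simp add: sorted_wrt_append)
qed

lemma rev_upto_sorted: "sorted_wrt (>) (rev [- int n .. int n])"
  by (simp add: sorted_wrt_rev sorted_wrt_upto)

lemma dw_sorted: "sorted_wrt Rd (diagword n f)"
  unfolding diagword_def by (rule sorted_chunks_d[OF rev_upto_sorted])

lemma sw_sorted: "sorted_wrt Rs (sigmaword n f)"
  unfolding sigmaword_def by (rule sorted_chunks_s[OF rev_upto_sorted])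

lemma union_diagcars: "(\<Union>k\<in>{- int n .. int n}. diagcars n f k) = {1..n}"
  using pdiag_bound unfolding diagcars_def by fastforce

lemma dw_set: "set (diagword n f) = {1..n}"
  unfolding diagword_def using union_diagcars by (simp add: diagcars_fin)

lemma sw_set: "set (sigmaword n f) = {1..n}"
  unfolding sigmaword_def using union_diagcars by (simp add: diagcars_fin set_sort)

lemma sorted_irrefl_distinct:
  "sorted_wrt P xs \<Longrightarrow> (\<And>x. \<not> P x x) \<Longrightarrow> distinct xs"
  by (induction xs) auto

lemma dw_distinct: "distinct (diagword n f)"
  using sorted_irrefl_distinct[OF dw_sorted] unfolding Rd_def by auto

lemma sw_distinct: "distinct (sigmaword n f)"
  using sorted_irrefl_distinct[OF sw_sorted] unfolding Rs_def by auto

lemma dw_length: "length (diagword n f) = n"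
  using distinct_card[OF dw_distinct] dw_set by simp

lemma sw_length: "length (sigmaword n f) = n"
  using distinct_card[OF sw_distinct] sw_set by simp

lemma nocross:
  assumes ca: "consec_adj (diagword n f) m"
  shows "pdiag n f m = pdiag n f (Suc m)"
proof (rule ccontr)
  let ?t = "diagword n f"
  let ?d = "pdiag n f"
  assume ne: "?d m \<noteq> ?d (Suc m)"
  obtain j where j: "j + 1 < length ?t" "?t ! j = m" "?t ! (j+1) = m + 1"
    using ca unfolding consec_adj_def by auto
  have srt: "\<And>i i'. i < i' \<Longrightarrow> i' < length ?t \<Longrightarrow> Rd (?t ! i) (?t ! i')"
    using dw_sorted by (simp add: sorted_wrt_iff_nth_less)
  have mI: "m \<in> {1..n}" and m1I: "Suc m \<in> {1..n}"
    using j dw_set nth_mem[of j ?t] nth_mem[of "j+1" ?t] by auto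
  have "Rd m (Suc m)" using srt[of j "j+1"] j by auto
  then have lt: "?d (Suc m) < ?d m" using ne unfolding Rd_def by auto
  define k' where "k' = ?d (Suc m)"
  have Z: "Suc m \<le> z" if z: "z \<in> {1..n}" "?d z = k'" for z
  proof -
    obtain i where i: "i < length ?t" "?t ! i = z" using z dw_set by (metis in_set_conv_nth)
    consider "i < j" | "i = j" | "i = j + 1" | "i > j + 1" by linarith
    then show ?thesis
    proof cases
      case 1 then show ?thesis using srt[of i j] i j z lt unfolding Rd_def k'_def by auto
    next
      case 2 then show ?thesis using i j z lt unfolding k'_def by auto
    next
      case 3 then show ?thesis using i j by auto
    next
      case 4 then show ?thesis using srt[of "j+1" i] i j z lt unfolding Rd_def k'_def by auto
    qed
  qed
  have W: "w \<le> m" if w: "w \<in> {1..n}" "?d w = k' + 1" for w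
  proof -
    obtain i where i: "i < length ?t" "?t ! i = w" using w dw_set by (metis in_set_conv_nth)
    consider "i < j" | "i = j" | "i = j + 1" | "i > j + 1" by linarith
    then show ?thesis
    proof cases
      case 1 then show ?thesis using srt[of i j] i j w lt unfolding Rd_def k'_def by auto
    next
      case 2 then show ?thesis using i j by auto
    next
      case 3 then show ?thesis using i j w unfolding k'_def by auto
    next
      case 4 then show ?thesis using srt[of "j+1" i] i j w lt unfolding Rd_def k'_def by auto
    qed
  qed
  have noS: False if h: "s1 \<le> s2" "s2 < n" "?d (car s1) \<le> k'" "?d (car s2) > k'" for s1 s2
  proof -
    obtain s where s: "s1 \<le> s" "s < s2" "?d (car s) = k'" "?d (car (Suc s)) = k' + 1"
        "car s < car (Suc s)"
      using climb[OF h] by blast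
    have "car s \<in> {1..n}" "car (Suc s) \<in> {1..n}" using car_in s h by auto
    then have "Suc m \<le> car s" "car (Suc s) \<le> m" using Z W s by auto
    then show False using s by auto
  qed
  have n0: "0 < n" using mI by auto
  define ra where "ra = prow n f m"
  define rb where "rb = prow n f (Suc m)"
  have ra: "ra < n" "car ra = m" using prow_less[OF mI] car_prow[OF mI] ra_def by auto
  have rb: "rb < n" "car rb = Suc m" using prow_less[OF m1I] car_prow[OF m1I] rb_def by auto
  have "ra \<noteq> rb" using ra rb by auto
  then consider "rb < ra" | "ra < rb" by linarith
  then show False
  proof cases
    case 1 then show False using noS[of rb ra] ra rb lt k'_def by auto
  next
    case 2
    show False
    proof (cases "?d (car (n - 1)) > k'")
      case True
      have "rb \<le> n - 1" using rb by auto
      then show False using noS[of rb "n-1"] rb k'_def n0 True by auto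
    next
      case False
      then have "?d (car 0) \<le> k'" using diag_first[OF n0] diag_last[OF n0] by auto
      then show False using noS[of 0 ra] ra lt k'_def by auto
    qed
  qed
qed

lemma block_diag:
  assumes "same_block (diagword n f) i k"
  shows "pdiag n f i = pdiag n f k"
proof -
  have main: "pdiag n f i = pdiag n f k" if "i \<le> k" "\<forall>m. i \<le> m \<and> m < k \<longrightarrow> consec_adj (diagword n f) m" for i k
    using that
  proof (induction k)
    case 0 then show ?case by simp
  next
    case (Suc k)
    show ?case
    proof (cases "i = Suc k")
      case False
      then have "pdiag n f i = pdiag n f k" using Suc by auto
      also have "\<dots> = pdiag n f (Suc k)" using nocross Suc.prems False by auto
      finally show ?thesis .
    qed simp
  qed
  show ?thesis
  proof (cases "i \<le> k")
    case True then show ?thesis using main[of i k] assms unfolding same_block_def by auto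
  next
    case False then show ?thesis using main[of k i] assms unfolding same_block_def by auto
  qed
qed

end

lemma sb_refl: "same_block t i i" unfolding same_block_def by auto
lemma sb_sym: "same_block t i k \<Longrightarrow> same_block t k i" unfolding same_block_def by (auto simp: min.commute max.commute)
lemma sb_trans: assumes "same_block t i j" "same_block t j k" shows "same_block t i k"
  unfolding same_block_def
proof (intro allI impI)
  fix m assume m: "min i k \<le> m \<and> m < max i k"
  have "(min i j \<le> m \<and> m < max i j) \<or> (min j k \<le> m \<and> m < max j k)" using m by linarith
  then show "consec_adj t m" using assms unfolding same_block_def by blast
qed
lemma sb_between: "same_block t i k \<Longrightarrow> i \<le> j \<Longrightarrow> j \<le> k \<Longrightarrow> same_block t i j"
  unfolding same_block_def by auto
lemma sb_order:
  assumes "\<not> same_block t x y" "x < y" "same_block t x x'" "same_block t y y'"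
  shows "x' < y'"
proof -
  obtain m where m: "x \<le> m" "m < y" "\<not> consec_adj t m" using assms(1,2) unfolding same_block_def by auto
  have "x' \<le> m"
  proof (rule ccontr)
    assume "\<not> x' \<le> m" then show False using assms(3) m unfolding same_block_def by auto
  qed
  moreover have "m < y'"
  proof (rule ccontr)
    assume "\<not> m < y'" then show False using assms(4) m unfolding same_block_def by auto
  qed
  ultimately show ?thesis by simp
qed
lemma sb_order_iff:
  assumes "\<not> same_block t x y" "same_block t x x'" "same_block t y y'"
  shows "x' < y' \<longleftrightarrow> x < y"
proof -
  have "x \<noteq> y" using assms(1) sb_refl by metis
  then consider "x < y" | "y < x" by linarith
  then show ?thesis
  proof cases
    case 1 then show ?thesis using sb_order[OF assms(1) 1 assms(2,3)] by simp
  next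
    case 2 then show ?thesis using sb_order[of t y x y' x'] assms sb_sym by fastforce
  qed
qed
lemma sb_congr:
  assumes "same_block t x x'" "same_block t y y'"
  shows "same_block t x' y' \<longleftrightarrow> same_block t x y"
  using assms sb_trans sb_sym by metis

definition BP :: "nat list \<Rightarrow> nat \<Rightarrow> (nat \<Rightarrow> nat) set" where
  "BP t n = {r. r permutes {1..n} \<and> (\<forall>i. same_block t i (r i))}"

lemma BP_id: "id \<in> BP t n" unfolding BP_def by (auto simp: permutes_id sb_refl)

lemma BP_comp: "r \<in> BP t n \<Longrightarrow> s \<in> BP t n \<Longrightarrow> r \<circ> s \<in> BP t n"
proof -
  assume a: "r \<in> BP t n" "s \<in> BP t n"
  have "same_block t i (r (s i))" for i using a unfolding BP_def using sb_trans by blast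
  then show ?thesis using a permutes_compose unfolding BP_def by auto
qed

lemma BP_inv: assumes "r \<in> BP t n" shows "inv r \<in> BP t n"
proof -
  have p: "r permutes {1..n}" using assms unfolding BP_def by auto
  have "same_block t i (inv r i)" for i
  proof -
    have "same_block t (inv r i) (r (inv r i))" using assms unfolding BP_def by auto
    then show ?thesis using permutes_inverses(1)[OF p] sb_sym by metis
  qed
  then show ?thesis using permutes_inv[OF p] unfolding BP_def by auto
qed

lemma BP_fin: "finite (BP t n)"
proof -
  have "BP t n \<subseteq> {r. r permutes {1..n}}" unfolding BP_def by auto
  then show ?thesis using finite_permutations[of "{1..n}"] finite_subset by auto
qed

definition relab :: "nat \<Rightarrow> (nat \<Rightarrow> nat) \<Rightarrow> (nat \<Rightarrow> nat) \<Rightarrow> nat \<Rightarrow> nat" where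
  "relab n f r = (\<lambda>c. if c \<in> {1..n} then f (r c) else undefined)"

lemma card_bij_eq:
  assumes "bij_betw r S S" "\<And>a. a \<in> S \<Longrightarrow> P a = Q (r a)"
  shows "card {a \<in> S. P a} = card {a \<in> S. Q a}"
proof -
  have "r ` {a \<in> S. P a} = {a \<in> S. Q a}"
  proof
    show "r ` {a \<in> S. P a} \<subseteq> {a \<in> S. Q a}" using assms unfolding bij_betw_def by auto
    show "{a \<in> S. Q a} \<subseteq> r ` {a \<in> S. P a}"
    proof
      fix b assume b: "b \<in> {a \<in> S. Q a}"
      then obtain a where a: "a \<in> S" "b = r a" using assms(1) unfolding bij_betw_def by (metis (no_types, lifting) imageE mem_Collect_eq)
      then show "b \<in> r ` {a \<in> S. P a}" using b assms(2) by auto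
    qed
  qed
  moreover have "inj_on r {a \<in> S. P a}" using assms(1) unfolding bij_betw_def by (auto intro: inj_on_subset)
  ultimately show ?thesis using card_image by fastforce
qed

lemma card_perm_eq:
  assumes "r permutes S" "\<And>a. a \<in> S \<Longrightarrow> P a = Q (r a)"
  shows "card {a \<in> S. P a} = card {a \<in> S. Q a}"
  using card_bij_eq[OF permutes_imp_bij[OF assms(1)]] assms(2) by blast

lemma card_perm_eq2:
  assumes "r permutes S" "\<And>a b. a \<in> S \<Longrightarrow> b \<in> S \<Longrightarrow> P a b = Q (r a) (r b)"
  shows "card {(a, b). a \<in> S \<and> b \<in> S \<and> P a b} = card {(a, b). a \<in> S \<and> b \<in> S \<and> Q a b}"
proof -
  have b: "bij_betw r S S" using permutes_imp_bij[OF assms(1)] .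
  have "card {x \<in> S \<times> S. case_prod P x} = card {x \<in> S \<times> S. case_prod Q x}"
    by (rule card_bij_eq[OF bij_betw_map_prod[OF b b]]) (use assms in auto)
  moreover have "{(a, b). a \<in> S \<and> b \<in> S \<and> P a b} = {x \<in> S \<times> S. case_prod P x}" by auto
  moreover have "{(a, b). a \<in> S \<and> b \<in> S \<and> Q a b} = {x \<in> S \<times> S. case_prod Q x}" by auto
  ultimately show ?thesis by simp
qed

definition invst :: "nat \<Rightarrow> (nat \<Rightarrow> nat) \<Rightarrow> nat" where
  "invst n r = card {(x, y). x \<in> {1..n} \<and> y \<in> {1..n} \<and> x < y \<and> r y < r x}"

definition idst :: "nat \<Rightarrow> (nat \<Rightarrow> nat) \<Rightarrow> nat set" where
  "idst n r = {i \<in> {1..<n}. r (Suc i) < r i}"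

lemma ides_sorted:
  assumes d: "distinct xs" and s: "sorted_wrt R xs" and asym: "\<And>x y. R x y \<Longrightarrow> \<not> R y x"
    and tot: "\<And>x y. x \<in> set xs \<Longrightarrow> y \<in> set xs \<Longrightarrow> x \<noteq> y \<Longrightarrow> R x y \<or> R y x"
    and st: "set xs = {1..length xs}"
  shows "ides xs = {i \<in> {1..<length xs}. R (Suc i) i}"
proof -
  have "(\<exists>a b. a < b \<and> b < length xs \<and> xs ! a = i + 1 \<and> xs ! b = i) \<longleftrightarrow> R (Suc i) i"
    if i: "i \<in> {1..<length xs}" for i
  proof
    assume "\<exists>a b. a < b \<and> b < length xs \<and> xs ! a = i + 1 \<and> xs ! b = i"
    then obtain a b where ab: "a < b" "b < length xs" "xs ! a = i + 1" "xs ! b = i" by auto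
    have "R (xs ! a) (xs ! b)" using s ab(1,2) by (simp add: sorted_wrt_iff_nth_less)
    then show "R (Suc i) i" using ab by simp
  next
    assume r: "R (Suc i) i"
    have "Suc i \<in> set xs" "i \<in> set xs" using i st by auto
    then obtain a b where a: "a < length xs" "xs ! a = Suc i" and b: "b < length xs" "xs ! b = i"
      by (metis in_set_conv_nth)
    have "a \<noteq> b" using a b by auto
    moreover have "\<not> b < a"
    proof
      assume "b < a"
      then have "R (xs ! b) (xs ! a)" using sorted_wrt_nth_less[OF s _ a(1)] by simp
      then have "R i (Suc i)" using a b by simp
      then show False using asym r by blast
    qed
    ultimately show "\<exists>a b. a < b \<and> b < length xs \<and> xs ! a = i + 1 \<and> xs ! b = i" using a b
      by (intro exI[of _ a] exI[of _ b]) auto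
  qed
  then show ?thesis unfolding ides_def by auto
qed

context PF
begin

abbreviation "tau \<equiv> diagword n f"

lemma relab_prow:
  assumes r: "r \<in> BP tau n" and c: "c \<in> {1..n}"
  shows "prow n (relab n f r) c = prow n f (r c)"
proof -
  have p: "r permutes {1..n}" using r unfolding BP_def by auto
  have rc: "r c \<in> {1..n}" using c by (simp only: permutes_in_image[OF p])
  have rel: "\<And>a. a \<in> {1..n} \<Longrightarrow> relab n f r a = f (r a)" unfolding relab_def by simp
  have 1: "card {c' \<in> {1..n}. relab n f r c' < relab n f r c} = card {d \<in> {1..n}. f d < f (r c)}"
  proof (rule card_perm_eq[OF p])
    fix a assume "a \<in> {1..n}" then show "(relab n f r a < relab n f r c) = (f (r a) < f (r c))"
      using rel c by simp
  qed
  have 2: "card {c' \<in> {1..n}. relab n f r c' = relab n f r c \<and> c' < c} = card {d \<in> {1..n}. f d = f (r c) \<and> d < r c}"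
  proof (rule card_perm_eq[OF p])
    fix a assume a: "a \<in> {1..n}"
    have ra: "r a \<in> {1..n}" using a by (simp only: permutes_in_image[OF p])
    have e: "relab n f r a = relab n f r c \<longleftrightarrow> f (r a) = f (r c)" using rel a c by simp
    show "(relab n f r a = relab n f r c \<and> a < c) = (f (r a) = f (r c) \<and> r a < r c)"
    proof (cases "a = c")
      case True then show ?thesis by simp
    next
      case False
      show ?thesis
      proof (cases "f (r a) = f (r c)")
        case True
        have "r a \<noteq> r c" using False permutes_inj[OF p] by (auto dest: injD)
        moreover have "pcol f (r a) = pcol f (r c)" using True unfolding pcol_def by simp
        ultimately have "pdiag n f (r a) \<noteq> pdiag n f (r c)" using col_inj_diag[OF ra rc] by blast
        then have nsb: "\<not> same_block tau (r a) (r c)" using block_diag[of "r a" "r c"] by auto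
        have sa: "same_block tau a (r a)" and sc: "same_block tau c (r c)" using r unfolding BP_def by auto
        have "\<not> same_block tau a c" using sb_congr[OF sa sc] nsb by simp
        then have "r a < r c \<longleftrightarrow> a < c"
          using sb_order_iff[OF _ sa sc] by simp
        then show ?thesis using True e by simp
      next
        case False then show ?thesis using e by simp
      qed
    qed
  qed
  show ?thesis unfolding prow_def using 1 2 by simp
qed

lemma relab_pcol: "c \<in> {1..n} \<Longrightarrow> pcol (relab n f r) c = pcol f (r c)"
  unfolding pcol_def relab_def by simp

lemma relab_pdiag:
  assumes r: "r \<in> BP tau n" and c: "c \<in> {1..n}"
  shows "pdiag n (relab n f r) c = pdiag n f c"
proof -
  have "pdiag n (relab n f r) c = pdiag n f (r c)"
    unfolding pdiag_def using relab_prow[OF r c] relab_pcol[OF c] by simp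
  also have "\<dots> = pdiag n f c"
  proof -
    have "same_block tau c (r c)" using r unfolding BP_def by auto
    then show ?thesis by (simp add: block_diag)
  qed
  finally show ?thesis .
qed

lemma relab_Pref: assumes r: "r \<in> BP tau n" shows "relab n f r \<in> Pref n"
proof -
  have p: "r permutes {1..n}" using r unfolding BP_def by auto
  have "r c \<in> {1..n}" if "c \<in> {1..n}" for c using that by (simp only: permutes_in_image[OF p])
  then show ?thesis unfolding Pref_def relab_def using fval by auto
qed

lemma relab_diagcars: assumes r: "r \<in> BP tau n" shows "diagcars n (relab n f r) k = diagcars n f k"
  unfolding diagcars_def by (rule Collect_cong) (use relab_pdiag[OF r] in auto)

lemma relab_diagword: assumes r: "r \<in> BP tau n" shows "diagword n (relab n f r) = tau"
proof -
  have "\<forall>k. diagcars n (relab n f r) k = diagcars n f k" using relab_diagcars[OF r] by simp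
  then show ?thesis unfolding diagword_def by simp
qed

lemma relab_pdev: "r \<in> BP tau n \<Longrightarrow> pdev n (relab n f r) = pdev n f"
proof -
  assume r: "r \<in> BP tau n"
  have "(\<lambda>c. - pdiag n (relab n f r) c) ` {1..n} = (\<lambda>c. - pdiag n f c) ` {1..n}"
    by (rule image_cong) (auto simp: relab_pdiag[OF r])
  then show ?thesis unfolding pdev_def by simp
qed

lemma relab_parea: assumes r: "r \<in> BP tau n" shows "parea n (relab n f r) = parea n f"
  unfolding parea_def relab_pdev[OF r] using relab_pdiag[OF r] by (metis (no_types, lifting) sum.cong)

definition lt :: "nat \<Rightarrow> nat \<Rightarrow> bool" where
  "lt z y = ((z < y \<and> \<not> same_block tau z y) \<or> (same_block tau z y \<and> pcol f y < pcol f z))"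

definition kap :: "nat \<Rightarrow> nat" where
  "kap y = (if y \<in> {1..n} then Suc (card {z \<in> {1..n}. lt z y}) else y)"

lemma lt_irrefl: "\<not> lt y y" unfolding lt_def by auto

lemma sb_col:
  assumes "y \<in> {1..n}" "z \<in> {1..n}" "y \<noteq> z" "same_block tau y z"
  shows "pcol f y \<noteq> pcol f z"
  using col_inj_diag[OF assms(1,2) block_diag[OF assms(4)]] assms(3) by blast

lemma lt_total:
  assumes "y \<in> {1..n}" "z \<in> {1..n}" "y \<noteq> z"
  shows "lt y z \<or> lt z y"
proof (cases "same_block tau y z")
  case True
  then have "pcol f y \<noteq> pcol f z" using sb_col assms by blast
  then show ?thesis using True sb_sym unfolding lt_def by (metis linorder_neqE_nat)
next
  case False
  then have "\<not> same_block tau z y" using sb_sym by blast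
  then show ?thesis using False assms(3) unfolding lt_def by (metis linorder_neqE_nat)
qed

lemma lt_trans:
  assumes ab: "lt a b" and bc: "lt b c"
  shows "lt a c"
proof -
  consider (1) "a < b" "\<not> same_block tau a b" | (2) "same_block tau a b" "pcol f b < pcol f a"
    using ab unfolding lt_def by auto
  then show ?thesis
  proof cases
    case 1
    consider (x) "b < c" "\<not> same_block tau b c" | (y) "same_block tau b c" "pcol f c < pcol f b"
      using bc unfolding lt_def by auto
    then show ?thesis
    proof cases
      case x
      have "\<not> same_block tau a c"
      proof
        assume "same_block tau a c"
        then have "same_block tau a b" using sb_between 1 x by (meson less_imp_le_nat)
        then show False using 1 by simp
      qed
      then show ?thesis using 1 x unfolding lt_def by auto
    next
      case y
      have "\<not> same_block tau a c" using 1 y sb_trans sb_sym by blast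
      moreover have "a < c" using sb_order[OF 1(2) 1(1) sb_refl y(1)] .
      ultimately show ?thesis unfolding lt_def by auto
    qed
  next
    case 2
    consider (x) "b < c" "\<not> same_block tau b c" | (y) "same_block tau b c" "pcol f c < pcol f b"
      using bc unfolding lt_def by auto
    then show ?thesis
    proof cases
      case x
      have "\<not> same_block tau a c" using 2 x sb_trans sb_sym by blast
      moreover have "a < c" using sb_order[OF x(2) x(1) sb_sym[OF 2(1)] sb_refl] .
      ultimately show ?thesis unfolding lt_def by auto
    next
      case y
      then show ?thesis using 2 sb_trans unfolding lt_def by (meson less_trans)
    qed
  qed
qed

lemma kap_mono:
  assumes "y \<in> {1..n}" "y' \<in> {1..n}" "lt y y'"
  shows "kap y < kap y'"
proof -
  have "{z \<in> {1..n}. lt z y} \<subset> {z \<in> {1..n}. lt z y'}"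
    using assms lt_trans lt_irrefl by blast
  then have "card {z \<in> {1..n}. lt z y} < card {z \<in> {1..n}. lt z y'}"
    by (intro psubset_card_mono) auto
  then show ?thesis using assms unfolding kap_def by simp
qed

lemma kap_lt_iff:
  assumes "y \<in> {1..n}" "y' \<in> {1..n}"
  shows "kap y < kap y' \<longleftrightarrow> lt y y'"
proof
  assume h: "kap y < kap y'"
  show "lt y y'"
  proof (rule ccontr)
    assume "\<not> lt y y'"
    then have "y = y' \<or> lt y' y" using lt_total assms by blast
    then show False using kap_mono[OF assms(2,1)] h by auto
  qed
qed (rule kap_mono[OF assms])

lemma kap_in: assumes "y \<in> {1..n}" shows "kap y \<in> {1..n}"
proof -
  have "{z \<in> {1..n}. lt z y} \<subseteq> {1..n} - {y}" using lt_irrefl by auto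
  then have "card {z \<in> {1..n}. lt z y} \<le> card ({1..n} - {y})" by (intro card_mono) auto
  then show ?thesis using assms unfolding kap_def by auto
qed

lemma kap_inj: "inj_on kap {1..n}"
proof (rule inj_onI)
  fix y y' assume a: "y \<in> {1..n}" "y' \<in> {1..n}" "kap y = kap y'"
  show "y = y'"
  proof (rule ccontr)
    assume "y \<noteq> y'"
    then show False using lt_total[OF a(1,2)] kap_mono a by fastforce
  qed
qed

lemma kap_perm: "kap permutes {1..n}"
proof -
  have "kap ` {1..n} \<subseteq> {1..n}" using kap_in by auto
  moreover have "card (kap ` {1..n}) = card {1..n}" using card_image[OF kap_inj] by simp
  ultimately have "kap ` {1..n} = {1..n}" by (intro card_subset_eq) auto
  then have "bij_betw kap {1..n} {1..n}" using kap_inj unfolding bij_betw_def by simp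
  moreover have "\<forall>x. x \<notin> {1..n} \<longrightarrow> kap x = x" unfolding kap_def by simp
  ultimately show ?thesis using bij_imp_permutes by blast
qed

lemma kap_sb: "same_block tau y (kap y)"
proof (cases "y \<in> {1..n}")
  case False then have "kap y = y" unfolding kap_def by auto
  then show ?thesis by (simp add: sb_refl)
next
  case yI: True
  let ?K = "{z \<in> {1..n}. lt z y}"
  have kv: "kap y = Suc (card ?K)" using yI unfolding kap_def by simp
  show ?thesis unfolding same_block_def
  proof (intro allI impI)
    fix m assume m: "min y (kap y) \<le> m \<and> m < max y (kap y)"
    show "consec_adj tau m"
    proof (rule ccontr)
      assume nc: "\<not> consec_adj tau m"
      show False
      proof (cases "y \<le> kap y")
        case True
        then have m2: "y \<le> m" "m < kap y" using m by auto
        have "?K \<subseteq> {1..m} - {y}"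
        proof
          fix z assume z: "z \<in> ?K"
          have "z \<le> m"
          proof (cases "same_block tau z y")
            case True
            show ?thesis
            proof (rule ccontr)
              assume "\<not> z \<le> m"
              then have "min z y \<le> m \<and> m < max z y" using m2 by auto
              then show False using True nc unfolding same_block_def by blast
            qed
          next
            case False then show ?thesis using z m2 unfolding lt_def by auto
          qed
          then show "z \<in> {1..m} - {y}" using z lt_irrefl by auto
        qed
        then have "card ?K \<le> card ({1..m} - {y})" by (intro card_mono) auto
        also have "\<dots> = m - 1" using yI m2 by simp
        finally show False using kv m2 yI by auto
      next
        case False
        then have m2: "kap y \<le> m" "m < y" using m by auto
        have "{1..m} \<subseteq> ?K"
        proof
          fix z assume z: "z \<in> {1..m}"
          have "\<not> same_block tau z y"
          proof
            assume "same_block tau z y"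
            then show False using z m2 nc unfolding same_block_def by auto
          qed
          then show "z \<in> ?K" using z m2 yI unfolding lt_def by auto
        qed
        then have "card {1..m} \<le> card ?K" by (intro card_mono) auto
        then show False using kv m2 by auto
      qed
    qed
  qed
qed

lemma kap_BP: "kap \<in> BP tau n"
  unfolding BP_def using kap_perm kap_sb by auto

lemma relab_lt:
  assumes r: "r \<in> BP tau n" and z: "z \<in> {1..n}" and y: "y \<in> {1..n}"
  shows "PF.lt n (relab n f r) z y = lt (r z) (r y)"
proof -
  have sz: "same_block tau z (r z)" and sy: "same_block tau y (r y)" using r unfolding BP_def by auto
  have e1: "same_block tau (r z) (r y) = same_block tau z y" using sb_congr[OF sz sy] .
  have e2: "\<not> same_block tau z y \<Longrightarrow> (r z < r y) = (z < y)" using sb_order_iff[OF _ sz sy] by simp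
  interpret G: PF n "relab n f r" using relab_Pref[OF r] by (rule PF.intro)
  show ?thesis unfolding G.lt_def relab_diagword[OF r] lt_def using relab_pcol z y e1 e2 by auto
qed

lemma relab_kap:
  assumes r: "r \<in> BP tau n"
  shows "PF.kap n (relab n f r) = kap \<circ> r"
proof
  fix y
  have p: "r permutes {1..n}" using r unfolding BP_def by auto
  interpret G: PF n "relab n f r" using relab_Pref[OF r] by (rule PF.intro)
  show "PF.kap n (relab n f r) y = (kap \<circ> r) y"
  proof (cases "y \<in> {1..n}")
    case True
    have ry: "r y \<in> {1..n}" using True by (simp only: permutes_in_image[OF p])
    have "card {z \<in> {1..n}. PF.lt n (relab n f r) z y} = card {z \<in> {1..n}. lt z (r y)}"
      by (rule card_perm_eq[OF p]) (use relab_lt[OF r _ True] in simp)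
    then show ?thesis unfolding G.kap_def using True ry by (simp add: kap_def)
  next
    case False
    then have "r y = y" using p unfolding permutes_def by auto
    then show ?thesis unfolding G.kap_def using False by (auto simp: kap_def)
  qed
qed

definition A1 where "A1 = {(a, b). a \<in> {1..n} \<and> b \<in> {1..n} \<and> pdiag n f a = pdiag n f b
                   \<and> pcol f a < pcol f b \<and> a < b \<and> \<not> same_block tau a b}"
definition Bs where "Bs = {(a, b). a \<in> {1..n} \<and> b \<in> {1..n} \<and> b < a
                   \<and> pdiag n f a = pdiag n f b + 1 \<and> pcol f b > pcol f a}"
definition Cs where "Cs = {c \<in> {1..n}. pdiag n f c < 0}"
definition dinvE where "dinvE = card A1 + card Bs + card Cs"

lemma pdinv_split: "pdinv n f = dinvE + invst n kap"
proof -
  define A where "A = {(a, b). a \<in> {1..n} \<and> b \<in> {1..n} \<and> pdiag n f a = pdiag n f b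
                   \<and> pcol f a < pcol f b \<and> a < b}"
  define A2 where "A2 = {(x, y). x \<in> {1..n} \<and> y \<in> {1..n} \<and> x < y \<and> kap y < kap x}"
  have "A2 = {(a, b). a \<in> {1..n} \<and> b \<in> {1..n} \<and> a < b \<and> same_block tau a b \<and> pcol f a < pcol f b}"
    unfolding A2_def using kap_lt_iff sb_sym unfolding lt_def by fastforce
  then have "A = A1 \<union> A2" unfolding A_def A1_def using block_diag by auto
  moreover have "A1 \<inter> A2 = {}" unfolding A1_def A2_def using kap_lt_iff sb_sym unfolding lt_def by fastforce
  moreover have "finite A1" "finite A2" unfolding A1_def A2_def
    by (rule finite_subset[of _ "{1..n} \<times> {1..n}"], auto)+
  ultimately have "card A = card A1 + card A2" by (simp add: card_Un_disjoint)
  moreover have "card A2 = invst n kap" unfolding A2_def invst_def by simp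
  ultimately show ?thesis unfolding pdinv_def dinvE_def A_def Bs_def Cs_def by simp
qed

lemma relab_dinvE:
  assumes r: "r \<in> BP tau n"
  shows "PF.dinvE n (relab n f r) = dinvE"
proof -
  let ?g = "relab n f r"
  have p: "r permutes {1..n}" using r unfolding BP_def by auto
  interpret G: PF n "relab n f r" using relab_Pref[OF r] by (rule PF.intro)
  have sbr: "\<And>a. same_block tau a (r a)" using r unfolding BP_def by auto
  have dg: "\<And>a. a \<in> {1..n} \<Longrightarrow> pdiag n ?g a = pdiag n f (r a)"
    using relab_pdiag[OF r] block_diag sbr by metis
  have cg: "\<And>a. a \<in> {1..n} \<Longrightarrow> pcol ?g a = pcol f (r a)" using relab_pcol by simp
  have 1: "card (PF.A1 n ?g) = card A1"
    unfolding G.A1_def A1_def relab_diagword[OF r]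
  proof (rule card_perm_eq2[OF p])
    fix a b assume a: "a \<in> {1..n}" and b: "b \<in> {1..n}"
    have e1: "same_block tau (r a) (r b) = same_block tau a b" using sb_congr[OF sbr sbr] .
    have e2: "\<not> same_block tau a b \<Longrightarrow> (r a < r b) = (a < b)" using sb_order_iff[OF _ sbr sbr] by simp
    show "(pdiag n ?g a = pdiag n ?g b \<and> pcol ?g a < pcol ?g b \<and> a < b \<and> \<not> same_block tau a b) =
          (pdiag n f (r a) = pdiag n f (r b) \<and> pcol f (r a) < pcol f (r b) \<and> r a < r b \<and> \<not> same_block tau (r a) (r b))"
      using dg[OF a] dg[OF b] cg[OF a] cg[OF b] e1 e2 by auto
  qed
  have 2: "card (PF.Bs n ?g) = card Bs"
    unfolding G.Bs_def Bs_def
  proof (rule card_perm_eq2[OF p])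
    fix a b assume a: "a \<in> {1..n}" and b: "b \<in> {1..n}"
    have e2: "\<not> same_block tau b a \<Longrightarrow> (r b < r a) = (b < a)" using sb_order_iff[OF _ sbr sbr] by simp
    have "pdiag n f a = pdiag n f b + 1 \<Longrightarrow> \<not> same_block tau b a" using block_diag by fastforce
    then have e3: "pdiag n f a = pdiag n f b + 1 \<Longrightarrow> (r b < r a) = (b < a)" using e2 by blast
    have "pdiag n f a = pdiag n f (r a)" "pdiag n f b = pdiag n f (r b)" using block_diag sbr by auto
    then show "(b < a \<and> pdiag n ?g a = pdiag n ?g b + 1 \<and> pcol ?g a < pcol ?g b) =
          (r b < r a \<and> pdiag n f (r a) = pdiag n f (r b) + 1 \<and> pcol f (r a) < pcol f (r b))"
      using dg[OF a] dg[OF b] cg[OF a] cg[OF b] e3 by auto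
  qed
  have 3: "card (PF.Cs n ?g) = card Cs"
    unfolding G.Cs_def Cs_def
    by (rule card_perm_eq[OF p]) (use dg in auto)
  show ?thesis unfolding G.dinvE_def dinvE_def using 1 2 3 by simp
qed

lemma same_diag_sb:
  assumes i: "i \<in> {1..n}" "Suc i \<in> {1..n}" and e: "pdiag n f i = pdiag n f (Suc i)"
  shows "same_block tau i (Suc i)"
proof -
  have srt: "\<And>a b. a < b \<Longrightarrow> b < length tau \<Longrightarrow> Rd (tau ! a) (tau ! b)"
    using dw_sorted by (simp add: sorted_wrt_iff_nth_less)
  obtain p where p: "p < length tau" "tau ! p = i" using i dw_set by (metis in_set_conv_nth)
  obtain p' where p': "p' < length tau" "tau ! p' = Suc i" using i dw_set by (metis in_set_conv_nth)
  have "p \<noteq> p'" using p p' by auto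
  moreover have "\<not> p' < p"
  proof
    assume h: "p' < p"
    have "Rd (tau ! p') (tau ! p)" using srt[OF h p(1)] .
    then have "Rd (Suc i) i" using p p' by simp
    then show False using e unfolding Rd_def by simp
  qed
  ultimately have pp: "p < p'" by simp
  have "p' = Suc p"
  proof (rule ccontr)
    assume "p' \<noteq> Suc p"
    then have q: "Suc p < p'" using pp by simp
    define z where "z = tau ! Suc p"
    have r1: "Rd i z" using srt[of p "Suc p"] p p' q unfolding z_def by simp
    have r2: "Rd z (Suc i)" using srt[OF q p'(1)] p' unfolding z_def by simp
    have "pdiag n f z < pdiag n f i \<or> (pdiag n f i = pdiag n f z \<and> i < z)" using r1 unfolding Rd_def .
    moreover have "pdiag n f (Suc i) < pdiag n f z \<or> (pdiag n f z = pdiag n f (Suc i) \<and> z < Suc i)" using r2 unfolding Rd_def .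
    ultimately show False using e by linarith
  qed
  then have "consec_adj tau i" unfolding consec_adj_def using p p' by (intro exI[of _ p]) auto
  then show ?thesis unfolding same_block_def
  proof (intro allI impI)
    fix m assume "min i (Suc i) \<le> m \<and> m < max i (Suc i)"
    then have "m = i" by auto
    then show "consec_adj tau m" using \<open>consec_adj tau i\<close> by simp
  qed
qed

lemma ides_tau: "ides tau = {i \<in> {1..<n}. pdiag n f i < pdiag n f (Suc i)}"
proof -
  have "ides tau = {i \<in> {1..<length tau}. Rd (Suc i) i}"
  proof (rule ides_sorted[OF dw_distinct dw_sorted])
    show "\<And>x y. Rd x y \<Longrightarrow> \<not> Rd y x" unfolding Rd_def by auto
    show "\<And>x y. x \<in> set tau \<Longrightarrow> y \<in> set tau \<Longrightarrow> x \<noteq> y \<Longrightarrow> Rd x y \<or> Rd y x" unfolding Rd_def by auto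
    show "set tau = {1..length tau}" using dw_set dw_length by simp
  qed
  then show ?thesis unfolding Rd_def dw_length by auto
qed

lemma ides_sigma: "ides (sigmaword n f) = ides tau \<union> idst n kap"
proof -
  have "ides (sigmaword n f) = {i \<in> {1..<length (sigmaword n f)}. Rs (Suc i) i}"
  proof (rule ides_sorted[OF sw_distinct sw_sorted])
    show "\<And>x y. Rs x y \<Longrightarrow> \<not> Rs y x" unfolding Rs_def by auto
    show "Rs x y \<or> Rs y x" if "x \<in> set (sigmaword n f)" "y \<in> set (sigmaword n f)" "x \<noteq> y" for x y
    proof -
      have "x \<in> {1..n}" "y \<in> {1..n}" using that sw_set by auto
      then have "pdiag n f x = pdiag n f y \<Longrightarrow> pcol f x \<noteq> pcol f y" using col_inj_diag that(3) by blast
      then show ?thesis unfolding Rs_def by auto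
    qed
    show "set (sigmaword n f) = {1..length (sigmaword n f)}" using sw_set sw_length by simp
  qed
  also have "\<dots> = {i \<in> {1..<n}. pdiag n f i < pdiag n f (Suc i) \<or> kap (Suc i) < kap i}"
  proof -
    have "Rs (Suc i) i \<longleftrightarrow> pdiag n f i < pdiag n f (Suc i) \<or> kap (Suc i) < kap i" if i: "i \<in> {1..<n}" for i
    proof -
      have iI: "i \<in> {1..n}" "Suc i \<in> {1..n}" using i by auto
      have "kap (Suc i) < kap i \<longleftrightarrow> same_block tau (Suc i) i \<and> pcol f i < pcol f (Suc i)"
        using kap_lt_iff[OF iI(2,1)] unfolding lt_def by auto
      moreover have "same_block tau (Suc i) i \<longleftrightarrow> pdiag n f i = pdiag n f (Suc i)"
      proof
        assume "same_block tau (Suc i) i" then show "pdiag n f i = pdiag n f (Suc i)" using block_diag by simp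
      next
        assume "pdiag n f i = pdiag n f (Suc i)" then show "same_block tau (Suc i) i"
          using same_diag_sb[OF iI] sb_sym by blast
      qed
      ultimately show ?thesis unfolding Rs_def by auto
    qed
    then show ?thesis using sw_length by auto
  qed
  finally show ?thesis unfolding ides_tau idst_def by auto
qed

end

definition lam :: "nat \<Rightarrow> (nat \<Rightarrow> nat) \<Rightarrow> nat list" where
  "lam n r = map (inv r) [1..<Suc n]"

lemma lam_nth: "i < n \<Longrightarrow> lam n r ! i = inv r (Suc i)"
  unfolding lam_def by (simp add: nth_upt del: upt_Suc)

lemma lam_length: "length (lam n r) = n" unfolding lam_def by simp

lemma lam_Y:
  assumes r: "r \<in> BP t n" and len: "length t = n"
  shows "lam n r \<in> Yconsec t"
proof -
  have p: "r permutes {1..n}" using r unfolding BP_def by auto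
  have pi: "inv r permutes {1..n}" using permutes_inv[OF p] .
  have "set (lam n r) = inv r ` {1..n}" unfolding lam_def by auto
  also have "\<dots> = {1..n}" using permutes_image[OF pi] .
  finally have s: "set (lam n r) = {1..n}" .
  have "distinct (lam n r)" unfolding lam_def using permutes_inj[OF pi]
    by (simp add: distinct_map inj_on_subset)
  then have "lam n r \<in> permutations_of_set {1..length t}" using s len
    by (simp add: permutations_of_set_def)
  moreover have "same_block t i (lam n r ! (i - 1))" if "i \<in> {1..length t}" for i
  proof -
    have "lam n r ! (i - 1) = inv r i" using that len lam_nth[of "i - 1" n r] by auto
    then show ?thesis using BP_inv[OF r] unfolding BP_def by auto
  qed
  ultimately show ?thesis unfolding Yconsec_def by auto
qed

lemma lam_inj: "inj_on (lam n) (BP t n)"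
proof (rule inj_onI)
  fix r s assume r: "r \<in> BP t n" and s: "s \<in> BP t n" and e: "lam n r = lam n s"
  have pr: "r permutes {1..n}" and ps: "s permutes {1..n}" using r s unfolding BP_def by auto
  have "inv r x = inv s x" for x
  proof (cases "x \<in> {1..n}")
    case True
    then have "lam n r ! (x - 1) = lam n s ! (x - 1)" using e by simp
    then show ?thesis using True lam_nth[of "x - 1" n] by auto
  next
    case False
    then show ?thesis using permutes_inv[OF pr] permutes_inv[OF ps] unfolding permutes_def by auto
  qed
  then have "inv r = inv s" by auto
  then show "r = s" using permutes_bij[OF pr] permutes_bij[OF ps] by (metis inv_inv_eq)
qed

lemma lam_surj:
  assumes pi: "\<pi> \<in> Yconsec t" and len: "length t = n"
  shows "\<exists>r \<in> BP t n. lam n r = \<pi>"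
proof -
  have pp: "\<pi> \<in> permutations_of_set {1..n}" and sb: "\<forall>i \<in> {1..n}. same_block t i (\<pi> ! (i - 1))"
    using pi len unfolding Yconsec_def by auto
  have sp: "set \<pi> = {1..n}" and dp: "distinct \<pi>" using pp unfolding permutations_of_set_def by auto
  have lp: "length \<pi> = n" using distinct_card[OF dp] sp by simp
  define p where "p i = (if i \<in> {1..n} then \<pi> ! (i - 1) else i)" for i
  have "p ` {1..n} = set \<pi>"
  proof
    show "p ` {1..n} \<subseteq> set \<pi>" unfolding p_def using lp by auto
    show "set \<pi> \<subseteq> p ` {1..n}"
    proof
      fix x assume "x \<in> set \<pi>"
      then obtain j where j: "j < n" "\<pi> ! j = x" using lp by (metis in_set_conv_nth)
      then have "p (Suc j) = x" unfolding p_def by auto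
      then show "x \<in> p ` {1..n}" using j by force
    qed
  qed
  moreover have "inj_on p {1..n}"
  proof (rule inj_onI)
    fix a b assume a: "a \<in> {1..n}" and b: "b \<in> {1..n}" and e: "p a = p b"
    then have "\<pi> ! (a - 1) = \<pi> ! (b - 1)" unfolding p_def by auto
    then have "a - 1 = b - 1" using nth_eq_iff_index_eq[OF dp, of "a - 1" "b - 1"] lp a b by auto
    then show "a = b" using a b by auto
  qed
  ultimately have "bij_betw p {1..n} {1..n}" using sp unfolding bij_betw_def by simp
  then have pper: "p permutes {1..n}" by (rule bij_imp_permutes) (auto simp: p_def)
  have pB: "p \<in> BP t n" unfolding BP_def
  proof (intro CollectI conjI allI pper)
    fix i show "same_block t i (p i)" using sb unfolding p_def by (auto simp: sb_refl)
  qed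
  have "lam n (inv p) = \<pi>"
  proof (rule nth_equalityI)
    show "length (lam n (inv p)) = length \<pi>" using lam_length lp by simp
    fix j assume "j < length (lam n (inv p))"
    then have j: "j < n" using lam_length by simp
    have "lam n (inv p) ! j = inv (inv p) (Suc j)" using lam_nth[OF j] .
    also have "\<dots> = p (Suc j)" using permutes_bij[OF pper] by (simp add: inv_inv_eq)
    also have "\<dots> = \<pi> ! j" unfolding p_def using j by auto
    finally show "lam n (inv p) ! j = \<pi> ! j" .
  qed
  then show ?thesis using BP_inv[OF pB] by blast
qed

lemma lam_bij: "length t = n \<Longrightarrow> bij_betw (lam n) (BP t n) (Yconsec t)"
  unfolding bij_betw_def using lam_inj lam_Y lam_surj by fastforce

lemma lam_inv_count:
  assumes r: "r \<in> BP t n"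
  shows "inv_count (lam n r) = invst n r"
proof -
  have p: "r permutes {1..n}" using r unfolding BP_def by auto
  have ri: "\<And>x. r (inv r x) = x" and ir: "\<And>x. inv r (r x) = x" using permutes_inverses[OF p] by auto
  have rin: "\<And>x. x \<in> {1..n} \<Longrightarrow> r x \<in> {1..n}" by (simp only: permutes_in_image[OF p])
  have irin: "\<And>x. x \<in> {1..n} \<Longrightarrow> inv r x \<in> {1..n}" by (simp only: permutes_in_image[OF permutes_inv[OF p]])
  let ?A = "{(x, y). x \<in> {1..n} \<and> y \<in> {1..n} \<and> x < y \<and> r y < r x}"
  let ?B = "{(i, j). i < j \<and> j < length (lam n r) \<and> lam n r ! i > lam n r ! j}"
  have "bij_betw (\<lambda>(x, y). (r y - 1, r x - 1)) ?A ?B"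
  proof (rule bij_betw_byWitness[where f' = "\<lambda>(i, j). (inv r (Suc j), inv r (Suc i))"])
    show "\<forall>a\<in>?A. (\<lambda>(i, j). (inv r (Suc j), inv r (Suc i))) ((\<lambda>(x, y). (r y - 1, r x - 1)) a) = a"
    proof
      fix a assume "a \<in> ?A"
      then obtain x y where a: "a = (x, y)" "x \<in> {1..n}" "y \<in> {1..n}" by auto
      then have "r x \<ge> 1" "r y \<ge> 1" using rin by force+
      then show "(\<lambda>(i, j). (inv r (Suc j), inv r (Suc i))) ((\<lambda>(x, y). (r y - 1, r x - 1)) a) = a"
        using a ir by simp
    qed
    show "\<forall>a\<in>?B. (\<lambda>(x, y). (r y - 1, r x - 1)) ((\<lambda>(i, j). (inv r (Suc j), inv r (Suc i))) a) = a"
      using ri by auto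
    show "(\<lambda>(x, y). (r y - 1, r x - 1)) ` ?A \<subseteq> ?B"
    proof
      fix b assume "b \<in> (\<lambda>(x, y). (r y - 1, r x - 1)) ` ?A"
      then obtain x y where xy: "x \<in> {1..n}" "y \<in> {1..n}" "x < y" "r y < r x" and b: "b = (r y - 1, r x - 1)" by auto
      have "r x \<in> {1..n}" "r y \<in> {1..n}" using rin xy by auto
      moreover have "lam n r ! (r y - 1) = y" "lam n r ! (r x - 1) = x"
        using lam_nth[of "r y - 1" n r] lam_nth[of "r x - 1" n r] ir \<open>r x \<in> {1..n}\<close> \<open>r y \<in> {1..n}\<close> by auto
      ultimately show "b \<in> ?B" using b xy lam_length[of n r] by auto
    qed
    show "(\<lambda>(i, j). (inv r (Suc j), inv r (Suc i))) ` ?B \<subseteq> ?A"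
    proof
      fix a assume "a \<in> (\<lambda>(i, j). (inv r (Suc j), inv r (Suc i))) ` ?B"
      then obtain i j where ij: "i < j" "j < n" "lam n r ! i > lam n r ! j" and a: "a = (inv r (Suc j), inv r (Suc i))"
        using lam_length[of n r] by auto
      have "inv r (Suc i) > inv r (Suc j)" using ij lam_nth[of i n r] lam_nth[of j n r] by auto
      moreover have "inv r (Suc i) \<in> {1..n}" "inv r (Suc j) \<in> {1..n}" using irin ij by auto
      ultimately show "a \<in> ?A" using a ri ij by auto
    qed
  qed
  then have "card ?A = card ?B" by (rule bij_betw_same_card)
  then show ?thesis unfolding inv_count_def invst_def by simp
qed

lemma lam_ides:
  assumes r: "r \<in> BP t n"
  shows "ides (lam n r) = idst n r"
proof -
  have p: "r permutes {1..n}" using r unfolding BP_def by auto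
  have ri: "\<And>x. r (inv r x) = x" and ir: "\<And>x. inv r (r x) = x" using permutes_inverses[OF p] by auto
  have rin: "\<And>x. x \<in> {1..n} \<Longrightarrow> r x \<in> {1..n}" by (simp only: permutes_in_image[OF p])
  have "(\<exists>a b. a < b \<and> b < n \<and> lam n r ! a = i + 1 \<and> lam n r ! b = i) \<longleftrightarrow> r (Suc i) < r i"
    if i: "i \<in> {1..<n}" for i
  proof
    assume "\<exists>a b. a < b \<and> b < n \<and> lam n r ! a = i + 1 \<and> lam n r ! b = i"
    then obtain a b where ab: "a < b" "b < n" "lam n r ! a = i + 1" "lam n r ! b = i" by auto
    then have "inv r (Suc a) = Suc i" "inv r (Suc b) = i" using lam_nth[of a n r] lam_nth[of b n r] by auto
    then have "r (Suc i) = Suc a" "r i = Suc b" using ri by metis+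
    then show "r (Suc i) < r i" using ab by simp
  next
    assume h: "r (Suc i) < r i"
    have "r (Suc i) \<in> {1..n}" "r i \<in> {1..n}" using rin i by auto
    then show "\<exists>a b. a < b \<and> b < n \<and> lam n r ! a = i + 1 \<and> lam n r ! b = i"
      using h lam_nth[of "r (Suc i) - 1" n r] lam_nth[of "r i - 1" n r] ir
      by (intro exI[of _ "r (Suc i) - 1"] exI[of _ "r i - 1"]) auto
  qed
  then show ?thesis unfolding ides_def idst_def lam_length by auto
qed


lemma relab_relab:
  assumes "\<And>c. c \<in> {1..n} \<Longrightarrow> s c \<in> {1..n}"
  shows "relab n (relab n f r) s = relab n f (r \<circ> s)"
proof
  fix c show "relab n (relab n f r) s c = relab n f (r \<circ> s) c"
    using assms[of c] unfolding relab_def by (cases "c \<in> {1..n}") auto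
qed

lemma relab_id: "f \<in> Pref n \<Longrightarrow> relab n f id = f"
proof
  fix c assume f: "f \<in> Pref n"
  show "relab n f id c = f c"
  proof (cases "c \<in> {1..n}")
    case False then show ?thesis using PiE_arb[of f "{1..n}" "\<lambda>_. {1..n}" c] f unfolding relab_def Pref_def by simp
  qed (simp add: relab_def)
qed

lemma phi_props:
  assumes pf: "PF n f" and r: "r \<in> BP (diagword n f) n"
  defines "g \<equiv> relab n f (inv (PF.kap n f) \<circ> r)"
  shows "PF n g" "diagword n g = diagword n f" "pdev n g = pdev n f" "parea n g = parea n f"
    "PF.dinvE n g = PF.dinvE n f" "PF.kap n g = r" "relab n g (inv r \<circ> PF.kap n f) = f"
proof -
  interpret PF n f by (rule pf)
  have rho: "inv kap \<circ> r \<in> BP tau n" using BP_comp[OF BP_inv[OF kap_BP] r] .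
  show "PF n g" unfolding g_def by (rule PF.intro) (rule relab_Pref[OF rho])
  show "diagword n g = diagword n f" unfolding g_def by (rule relab_diagword[OF rho])
  show "pdev n g = pdev n f" unfolding g_def by (rule relab_pdev[OF rho])
  show "parea n g = parea n f" unfolding g_def by (rule relab_parea[OF rho])
  show "PF.dinvE n g = PF.dinvE n f" unfolding g_def by (rule relab_dinvE[OF rho])
  have "PF.kap n g = kap \<circ> (inv kap \<circ> r)" unfolding g_def by (rule relab_kap[OF rho])
  also have "\<dots> = r" using permutes_inv_o(1)[OF kap_perm] by (simp add: o_assoc)
  finally show "PF.kap n g = r" .
  have pr: "r permutes {1..n}" using r unfolding BP_def by auto
  have "relab n g (inv r \<circ> kap) = relab n f ((inv kap \<circ> r) \<circ> (inv r \<circ> kap))"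
    unfolding g_def
  proof (rule relab_relab)
    fix c assume c: "c \<in> {1..n}"
    have "kap c \<in> {1..n}" using kap_in[OF c] .
    then show "(inv r \<circ> kap) c \<in> {1..n}" by (simp only: o_apply permutes_in_image[OF permutes_inv[OF pr]])
  qed
  also have "(inv kap \<circ> r) \<circ> (inv r \<circ> kap) = id"
  proof -
    have "(inv kap \<circ> r) \<circ> (inv r \<circ> kap) = inv kap \<circ> (r \<circ> inv r) \<circ> kap" by (simp add: o_assoc)
    also have "\<dots> = id" using permutes_inv_o[OF pr] permutes_inv_o[OF kap_perm] by simp
    finally show ?thesis .
  qed
  also have "relab n f id = f" using relab_id fP by blast
  finally show "relab n g (inv r \<circ> PF.kap n f) = f" .
qed

theorem lemma4p1:
  fixes n l :: nat and \<tau> :: "nat list" and t q :: "'a :: field" and \<alpha> :: "nat \<Rightarrow> nat"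
  assumes "\<tau> \<in> permutations_of_set {1..n}"
    and "nruns \<tau> \<ge> l + 1"
    and "(\<Sum>\<pi>\<in>Yconsec \<tau>. q ^ inv_count \<pi>) \<noteq> 0"
  shows "(\<Sum>f\<in>{f \<in> Pref n. diagword n f = \<tau> \<and> pdev n f = int l}.
            t ^ parea n f * q ^ pdinv n f * of_nat (Qcoeff n (ides (sigmaword n f)) \<alpha>))
       = (\<Sum>f\<in>{f \<in> Pref n. diagword n f = \<tau> \<and> pdev n f = int l}. t ^ parea n f * q ^ pdinv n f)
         * (\<Sum>\<pi>\<in>Yconsec \<tau>. q ^ inv_count \<pi> * of_nat (Qcoeff n (ides \<tau> \<union> ides \<pi>) \<alpha>))
         / (\<Sum>\<pi>\<in>Yconsec \<tau>. q ^ inv_count \<pi>)"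
proof -
  have dt: "distinct \<tau>" "set \<tau> = {1..n}" using assms(1) unfolding permutations_of_set_def by auto
  have len: "length \<tau> = n" using distinct_card[OF dt(1)] dt(2) by simp
  define S where "S = {f \<in> Pref n. diagword n f = \<tau> \<and> pdev n f = int l}"
  define B where "B = BP \<tau> n"
  define K where "K f = PF.kap n f" for f
  define E where "E f = PF.dinvE n f" for f
  define Qf where "Qf X = (of_nat (Qcoeff n X \<alpha>) :: 'a)" for X
  define c where "c f = t ^ parea n f * q ^ E f" for f
  have PFS: "PF n f" if "f \<in> S" for f using that unfolding S_def by (auto intro: PF.intro)
  have dwS: "diagword n f = \<tau>" if "f \<in> S" for f using that unfolding S_def by auto
  have finS: "finite S"
  proof -
    have "S \<subseteq> Pref n" unfolding S_def by auto
    moreover have "finite (Pref n)" unfolding Pref_def by (intro finite_PiE) auto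
    ultimately show ?thesis by (rule finite_subset)
  qed
  have finB: "finite B" unfolding B_def by (rule BP_fin)
  have KB: "K f \<in> B" if "f \<in> S" for f
    using PF.kap_BP[OF PFS[OF that]] dwS[OF that] unfolding K_def B_def by simp
  have lhs: "(\<Sum>f\<in>S. t ^ parea n f * q ^ pdinv n f * Qf (ides (sigmaword n f)))
      = (\<Sum>f\<in>S. c f * q ^ invst n (K f) * Qf (ides \<tau> \<union> idst n (K f)))"
  proof (rule sum.cong[OF refl])
    fix f assume f: "f \<in> S"
    have "pdinv n f = E f + invst n (K f)" using PF.pdinv_split[OF PFS[OF f]] unfolding E_def K_def .
    moreover have "ides (sigmaword n f) = ides \<tau> \<union> idst n (K f)"
      using PF.ides_sigma[OF PFS[OF f]] dwS[OF f] unfolding K_def by simp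
    ultimately show "t ^ parea n f * q ^ pdinv n f * Qf (ides (sigmaword n f))
        = c f * q ^ invst n (K f) * Qf (ides \<tau> \<union> idst n (K f))"
      unfolding c_def by (simp add: power_add mult.assoc)
  qed
  have wsum: "(\<Sum>f\<in>S. t ^ parea n f * q ^ pdinv n f) = (\<Sum>f\<in>S. c f * q ^ invst n (K f))"
  proof (rule sum.cong[OF refl])
    fix f assume f: "f \<in> S"
    have "pdinv n f = E f + invst n (K f)" using PF.pdinv_split[OF PFS[OF f]] unfolding E_def K_def .
    then show "t ^ parea n f * q ^ pdinv n f = c f * q ^ invst n (K f)"
      unfolding c_def by (simp add: power_add mult.assoc)
  qed
  have lb: "bij_betw (lam n) B (Yconsec \<tau>)" unfolding B_def by (rule lam_bij[OF len])
  have dsum: "(\<Sum>\<pi>\<in>Yconsec \<tau>. q ^ inv_count \<pi>) = (\<Sum>r\<in>B. q ^ invst n r)"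
  proof -
    have "(\<Sum>\<pi>\<in>Yconsec \<tau>. q ^ inv_count \<pi>) = (\<Sum>r\<in>B. q ^ inv_count (lam n r))"
      using sum.reindex_bij_betw[OF lb, of "\<lambda>\<pi>. q ^ inv_count \<pi>"] by simp
    also have "\<dots> = (\<Sum>r\<in>B. q ^ invst n r)"
      by (rule sum.cong[OF refl]) (simp add: lam_inv_count B_def)
    finally show ?thesis .
  qed
  have nsum: "(\<Sum>\<pi>\<in>Yconsec \<tau>. q ^ inv_count \<pi> * Qf (ides \<tau> \<union> ides \<pi>))
      = (\<Sum>r\<in>B. q ^ invst n r * Qf (ides \<tau> \<union> idst n r))"
  proof -
    have "(\<Sum>\<pi>\<in>Yconsec \<tau>. q ^ inv_count \<pi> * Qf (ides \<tau> \<union> ides \<pi>))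
        = (\<Sum>r\<in>B. q ^ inv_count (lam n r) * Qf (ides \<tau> \<union> ides (lam n r)))"
      using sum.reindex_bij_betw[OF lb, of "\<lambda>\<pi>. q ^ inv_count \<pi> * Qf (ides \<tau> \<union> ides \<pi>)"] by simp
    also have "\<dots> = (\<Sum>r\<in>B. q ^ invst n r * Qf (ides \<tau> \<union> idst n r))"
      by (rule sum.cong[OF refl]) (simp add: lam_inv_count lam_ides B_def)
    finally show ?thesis .
  qed
  define a where "a x = (case x of (f, r) \<Rightarrow> c f * q ^ invst n (K f) * Qf (ides \<tau> \<union> idst n (K f)) * q ^ invst n r)" for x
  define b where "b x = (case x of (f, r) \<Rightarrow> c f * q ^ invst n (K f) * (q ^ invst n r * Qf (ides \<tau> \<union> idst n r)))" for x
  define Phi where "Phi x = (case x of (f, r) \<Rightarrow> (relab n f (inv (K f) \<circ> r), K f))" for x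
  have Phi_props: "Phi x \<in> S \<times> B \<and> Phi (Phi x) = x \<and> b (Phi x) = a x" if x: "x \<in> S \<times> B" for x
  proof -
    obtain f r where fr: "x = (f, r)" "f \<in> S" "r \<in> B" using x by auto
    have rB: "r \<in> BP (diagword n f) n" using fr dwS unfolding B_def by simp
    note P = phi_props[OF PFS[OF fr(2)] rB]
    define g where "g = relab n f (inv (K f) \<circ> r)"
    have Px: "Phi x = (g, K f)" unfolding Phi_def g_def fr by simp
    have gS: "g \<in> S" using P(1-3) fr(2) unfolding S_def g_def K_def by (auto intro: PF.fP)
    have Kg: "K g = r" using P(6) unfolding g_def K_def .
    have "Phi (Phi x) = Phi (g, K f)" using Px by simp
    also have "\<dots> = (relab n g (inv (K g) \<circ> K f), K g)" unfolding Phi_def by simp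
    also have "\<dots> = (relab n g (inv r \<circ> K f), r)" using Kg by simp
    also have "\<dots> = x" using P(7) fr(1) unfolding g_def K_def by simp
    finally have PP: "Phi (Phi x) = x" .
    have cg: "c g = c f" using P(4,5) unfolding c_def E_def g_def K_def by simp
    have "b (Phi x) = b (g, K f)" using Px by simp
    also have "\<dots> = a x" unfolding b_def a_def fr(1) using cg Kg by (simp add: ac_simps)
    finally have "b (Phi x) = a x" .
    then show ?thesis using PP gS KB[OF fr(2)] Px by simp
  qed
  have ab: "sum a (S \<times> B) = sum b (S \<times> B)"
  proof -
    have "sum b (S \<times> B) = sum (b \<circ> Phi) (S \<times> B)"
    proof (rule sum.reindex_bij_witness[of _ Phi Phi])
      show "\<And>x. x \<in> S \<times> B \<Longrightarrow> Phi (Phi x) = x" using Phi_props by blast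
      show "\<And>x. x \<in> S \<times> B \<Longrightarrow> Phi x \<in> S \<times> B" using Phi_props by blast
      show "\<And>x. x \<in> S \<times> B \<Longrightarrow> Phi (Phi x) = x" using Phi_props by blast
      show "\<And>x. x \<in> S \<times> B \<Longrightarrow> Phi x \<in> S \<times> B" using Phi_props by blast
      show "\<And>x. x \<in> S \<times> B \<Longrightarrow> (b \<circ> Phi) (Phi x) = b x" using Phi_props by simp
    qed
    also have "\<dots> = sum a (S \<times> B)" by (rule sum.cong[OF refl]) (use Phi_props in simp)
    finally show ?thesis by simp
  qed
  define L where "L = (\<Sum>f\<in>S. c f * q ^ invst n (K f) * Qf (ides \<tau> \<union> idst n (K f)))"
  define W where "W = (\<Sum>f\<in>S. c f * q ^ invst n (K f))"
  define D where "D = (\<Sum>r\<in>B. q ^ invst n r)"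
  define N where "N = (\<Sum>r\<in>B. q ^ invst n r * Qf (ides \<tau> \<union> idst n r))"
  have "L * D = sum a (S \<times> B)"
    unfolding L_def D_def a_def sum_product sum.cartesian_product by simp
  moreover have "W * N = sum b (S \<times> B)"
    unfolding W_def N_def b_def sum_product sum.cartesian_product by simp
  ultimately have LDWN: "L * D = W * N" using ab by simp
  have D0: "D \<noteq> 0" using assms(3) dsum unfolding D_def by simp
  have "L = W * N / D" using LDWN D0 by (simp add: eq_divide_eq)
  then show ?thesis
    using lhs wsum dsum nsum unfolding L_def W_def D_def N_def S_def Qf_def by simp
qed

end
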